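(* Fix real numbers $w>0$ and $c>0$. For each integer $n\ge 3$, let $T_n$ be a binary phylogenetic tree with leaf set $X_n$, $|X_n|=n$, with positive edge lengths and minimum interior edge length $w$, and let $d_n$ be its tree metric. Let $\delta_n(x,y)=d_n(x,y)+\epsilon_{xy}$ for unordered pairs $\{x,y\}\subseteq X_n$, $x\ne y$, where the $\epsilon_{xy}$ are independent normal random variables with mean $0$ and variance $\sigma_n^2=c^2/\log(n)$. Let $P_n$ be the probability that $|\delta_n(x,y)-d_n(x,y)|<\frac{1}{2}w$ holds simultaneously for all pairs of distinct $x,y\in X_n$. Then $P_n\to 0$ as $n\to\infty$ if $c>\frac{1}{4}w$, and $P_n\to 1$ as $n\to\infty$ if $c<\frac14 w$.
   Context: A phylogenetic $X$-tree is a tree whose leaves are bijectively labelled by $X$ and whose interior vertices have degree at least 3; it is binary if all interior vertices have degree 3. Given positive edge lengths, the tree metric $d$ assigns to each pair of leaves the total length of the path between them. An interior edge is an edge not incident to a leaf. $\log$ denotes the natural logarithm. *)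

theory Defs
  imports "HOL-Probability.Probability"
begin

definition simple_graph :: "'v set \<Rightarrow> 'v set set \<Rightarrow> bool" where
  "simple_graph V E \<longleftrightarrow> finite V \<and> (\<forall>e\<in>E. \<exists>u v. e = {u, v} \<and> u \<noteq> v \<and> u \<in> V \<and> v \<in> V)"

definition is_path :: "'v set \<Rightarrow> 'v set set \<Rightarrow> 'v \<Rightarrow> 'v \<Rightarrow> 'v list \<Rightarrow> bool" where
  "is_path V E u v ps \<longleftrightarrow> ps \<noteq> [] \<and> hd ps = u \<and> last ps = v \<and> distinct ps \<and> set ps \<subseteq> V
     \<and> (\<forall>i. Suc i < length ps \<longrightarrow> {ps ! i, ps ! Suc i} \<in> E)"

definition path_edges :: "'v list \<Rightarrow> 'v set set" where
  "path_edges ps = {{ps ! i, ps ! Suc i} | i. Suc i < length ps}"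

definition is_tree :: "'v set \<Rightarrow> 'v set set \<Rightarrow> bool" where
  "is_tree V E \<longleftrightarrow> simple_graph V E \<and> V \<noteq> {} \<and>
     (\<forall>u\<in>V. \<forall>v\<in>V. \<exists>!ps. is_path V E u v ps)"

definition degree :: "'v set set \<Rightarrow> 'v \<Rightarrow> nat" where
  "degree E v = card {e\<in>E. v \<in> e}"

definition leaves :: "'v set \<Rightarrow> 'v set set \<Rightarrow> 'v set" where
  "leaves V E = {v\<in>V. degree E v = 1}"

definition interior_edges :: "'v set \<Rightarrow> 'v set set \<Rightarrow> 'v set set" where
  "interior_edges V E = {e\<in>E. e \<inter> leaves V E = {}}"

definition binary_phylo_tree :: "'l set \<Rightarrow> 'v set \<Rightarrow> 'v set set \<Rightarrow> ('l \<Rightarrow> 'v) \<Rightarrow> bool" where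
  "binary_phylo_tree X V E phi \<longleftrightarrow> is_tree V E \<and> bij_betw phi X (leaves V E)
     \<and> (\<forall>v\<in>V - leaves V E. degree E v = 3)"

definition tree_metric :: "'v set \<Rightarrow> 'v set set \<Rightarrow> ('v set \<Rightarrow> real) \<Rightarrow> ('l \<Rightarrow> 'v) \<Rightarrow> 'l \<Rightarrow> 'l \<Rightarrow> real" where
  "tree_metric V E len phi x y =
     (\<Sum>e\<in>path_edges (THE ps. is_path V E (phi x) (phi y) ps). len e)"

definition upairs :: "'l set \<Rightarrow> 'l set set" where
  "upairs X = {{x, y} | x y. x \<in> X \<and> y \<in> X \<and> x \<noteq> y}"

end

theory Submission
  imports Defs
begin


lemma nd_pointwise_upper:
  fixes s t u x :: real
  assumes s: "s > 0" and u: "0 < u" "u < 1" and tx: "t \<le> \<bar>x\<bar>" and t: "0 \<le> t"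
  shows "normal_density 0 s x \<le> exp (-(1-u)*t^2/(2 * s^2)) / sqrt u * normal_density 0 (s / sqrt u) x"
proof -
  define A where "A = -(1-u)*t^2/(2 * s^2)"
  define B where "B = -(x^2)/(2 * (s^2/u))"
  have sq: "(s / sqrt u)^2 = s^2/u" using u by (simp add: power_divide)
  have e1: "sqrt (2*pi*(s^2/u)) = sqrt (2*pi * s^2) / sqrt u"
    using u by (simp add: real_sqrt_divide)
  have r: "exp A / sqrt u * normal_density 0 (s / sqrt u) x
     = 1 / sqrt (2*pi * s^2) * (exp A * exp B)"
    unfolding normal_density_def sq e1 B_def using u s
    by (simp add: field_simps)
  have "t^2 \<le> x^2" using tx t
    by (metis abs_le_square_iff abs_of_nonneg)
  hence "(1-u)*t^2 \<le> (1-u)*x^2" using u by (intro mult_left_mono) auto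
  hence "-(x^2) \<le> -(1-u)*t^2 - u*x^2" by (simp add: algebra_simps)
  hence "-(x^2)/(2 * s^2) \<le> (-(1-u)*t^2 - u*x^2)/(2 * s^2)"
    using s by (intro divide_right_mono) auto
  also have "\<dots> = A + B"
    unfolding A_def B_def using u s by (simp add: field_simps)
  finally have "-(x^2)/(2 * s^2) \<le> A + B" .
  hence "exp (-(x^2)/(2 * s^2)) \<le> exp A * exp B" by (simp add: exp_add[symmetric])
  then show ?thesis unfolding A_def[symmetric] r unfolding normal_density_def using s
    by (intro mult_left_mono) auto
qed

lemma nd_measure:
  assumes A: "A \<in> sets borel" and s: "s > 0"
  shows "measure (density lborel (\<lambda>x. ennreal (normal_density 0 s x))) A
       = (\<integral>x. normal_density 0 s x * indicator A x \<partial>lborel)"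
proof -
  have A': "A \<in> sets lborel" using A by simp
  have I: "integrable lborel (\<lambda>x. normal_density 0 s x * indicator A x)"
    by (rule integrable_real_mult_indicator[OF A' integrable_normal_density[OF s]])
  have "emeasure (density lborel (\<lambda>x. ennreal (normal_density 0 s x))) A
      = (\<integral>\<^sup>+x. ennreal (normal_density 0 s x * indicator A x) \<partial>lborel)"
    using A by (subst emeasure_density) (auto intro!: nn_integral_cong simp: indicator_def)
  also have "\<dots> = ennreal (\<integral>x. normal_density 0 s x * indicator A x \<partial>lborel)"
    using I by (intro nn_integral_eq_integral) auto
  finally show ?thesis unfolding measure_def
    by (simp add: integral_nonneg_AE)
qed

lemma tail_set_borel: "{x::real. t \<le> \<bar>x\<bar>} \<in> sets borel"
  by measurable

lemma tail_upper:
  fixes s t u :: real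
  assumes s: "s > 0" and u: "0 < u" "u < 1" and t: "0 \<le> t"
  shows "measure (density lborel (\<lambda>x. ennreal (normal_density 0 s x))) {x. t \<le> \<bar>x\<bar>}
         \<le> exp (-(1-u)*t^2/(2 * s^2)) / sqrt u"
proof -
  let ?K = "exp (-(1-u)*t^2/(2 * s^2)) / sqrt u"
  have s': "s / sqrt u > 0" using s u by simp
  have "(\<integral>x. normal_density 0 s x * indicator {x. t \<le> \<bar>x\<bar>} x \<partial>lborel)
      \<le> (\<integral>x. ?K * normal_density 0 (s / sqrt u) x \<partial>lborel)"
  proof (rule integral_mono)
    show "integrable lborel (\<lambda>x. normal_density 0 s x * indicator {x. t \<le> \<bar>x\<bar>} x)"
      using tail_set_borel[of t] 
      by (intro integrable_real_mult_indicator[OF _ integrable_normal_density[OF s]]) simp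
    show "integrable lborel (\<lambda>x. ?K * normal_density 0 (s / sqrt u) x)"
      using integrable_normal_density[OF s'] by simp
    fix x :: real
    show "normal_density 0 s x * indicator {x. t \<le> \<bar>x\<bar>} x \<le> ?K * normal_density 0 (s / sqrt u) x"
      using nd_pointwise_upper[OF s u _ t, of x] u by (auto simp: indicator_def)
  qed
  also have "\<dots> = ?K" using integral_normal_density[OF s'] by simp
  finally show ?thesis by (subst nd_measure[OF tail_set_borel s])
qed

lemma tail_lower:
  fixes s t r :: real
  assumes s: "s > 0" and t: "0 \<le> t" "t \<le> r"
  shows "(r - t) * normal_density 0 s r
     \<le> measure (density lborel (\<lambda>x. ennreal (normal_density 0 s x))) {x. t \<le> \<bar>x\<bar>}"
proof -
  have "(r - t) * normal_density 0 s r = (\<integral>x. normal_density 0 s r * indicator {t..r} x \<partial>lborel)"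
    using t by simp
  also have "\<dots> \<le> (\<integral>x. normal_density 0 s x * indicator {x. t \<le> \<bar>x\<bar>} x \<partial>lborel)"
  proof (rule integral_mono)
    show "integrable lborel (\<lambda>x. normal_density 0 s x * indicator {x. t \<le> \<bar>x\<bar>} x)"
      using tail_set_borel[of t] 
      by (intro integrable_real_mult_indicator[OF _ integrable_normal_density[OF s]]) simp
    show "integrable lborel (\<lambda>x. normal_density 0 s r * indicator {t..r} x)"
      using t by (simp add: integrable_indicator_iff emeasure_lborel_Icc)
    fix x :: real
    show "normal_density 0 s r * indicator {t..r} x \<le> normal_density 0 s x * indicator {x. t \<le> \<bar>x\<bar>} x"
    proof (cases "x \<in> {t..r}")
      case True
      hence "x^2 \<le> r^2" using t by (intro power_mono) auto
      hence "exp (-(r^2)/(2* s^2)) \<le> exp (-(x^2)/(2* s^2))" using s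
        by (simp add: divide_right_mono)
      then show ?thesis using True t unfolding normal_density_def
        by (auto simp: indicator_def intro!: divide_right_mono)
    qed (auto simp: indicator_def)
  qed
  finally show ?thesis by (subst nd_measure[OF tail_set_borel s])
qed

lemma prob_part:
  fixes e :: "'i \<Rightarrow> 'w \<Rightarrow> real" and g :: "real \<Rightarrow> real"
  assumes P: "prob_space M" and U: "finite U" "U \<noteq> {}"
    and ind: "prob_space.indep_vars M (\<lambda>_. borel) e U"
    and dist: "\<And>p. p \<in> U \<Longrightarrow> distributed M lborel (e p) (\<lambda>x. ennreal (g x))"
    and D: "prob_space (density lborel (\<lambda>x. ennreal (g x)))"
  shows "measure M {\<omega> \<in> space M. \<forall>p\<in>U. \<bar>e p \<omega>\<bar> < t}
       = (1 - measure (density lborel (\<lambda>x. ennreal (g x))) {x. t \<le> \<bar>x\<bar>}) ^ card U"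
proof -
  interpret prob_space M by (rule P)
  let ?D = "density lborel (\<lambda>x. ennreal (g x))"
  interpret d: prob_space ?D by (rule D)
  define A where "A p = e p -` {x. \<bar>x\<bar> < t} \<inter> space M" for p
  have Sb: "{x::real. \<bar>x\<bar> < t} \<in> sets borel" by measurable
  have ind2: "indep_sets (\<lambda>i. {e i -` B \<inter> space M | B. B \<in> sets borel}) U"
    using ind unfolding indep_vars_def2 by auto
  have "prob (\<Inter>p\<in>U. A p) = (\<Prod>p\<in>U. prob (A p))"
    by (rule indep_setsD[OF ind2 subset_refl U(2) U(1)]) (auto simp: A_def intro!: exI[of _ "{x. \<bar>x\<bar> < t}"] Sb)
  moreover have "(\<Inter>p\<in>U. A p) = {\<omega> \<in> space M. \<forall>p\<in>U. \<bar>e p \<omega>\<bar> < t}"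
    using U(2) by (auto simp: A_def)
  moreover have "prob (A p) = 1 - d.prob {x. t \<le> \<bar>x\<bar>}" if p: "p \<in> U" for p
  proof -
    have m: "e p \<in> measurable M lborel" using distributed_measurable[OF dist[OF p]] .
    have "prob (A p) = measure (distr M lborel (e p)) {x. \<bar>x\<bar> < t}"
      unfolding A_def using m Sb by (subst measure_distr) auto
    also have "\<dots> = d.prob {x. \<bar>x\<bar> < t}"
      using distributed_distr_eq_density[OF dist[OF p]] by simp
    also have "{x::real. \<bar>x\<bar> < t} = space ?D - {x. t \<le> \<bar>x\<bar>}" by auto
    also have "d.prob \<dots> = 1 - d.prob {x. t \<le> \<bar>x\<bar>}"
      by (rule d.prob_compl) (use tail_set_borel in simp)
    finally show ?thesis .
  qed
  ultimately show ?thesis by simp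
qed



lemma pw: "(x::real) > 0 \<Longrightarrow> x^2 * x powr (-b) = x powr (2 - b)"
proof -
  assume x: "x > 0"
  have "x powr (2 - b) = x powr 2 * x powr (-b)" by (simp add: powr_add[symmetric])
  also have "x powr 2 = x^2" using x by (simp add: powr_numeral)
  finally show ?thesis by simp
qed
lemma pw2: "(x::real) > 0 \<Longrightarrow> C \<noteq> 0 \<Longrightarrow> 1 / (C / 4 * x powr (2 - b)) = (4 / C) * x powr (b - 2)"
proof -
  assume x: "x > 0" and C: "C \<noteq> 0"
  have "x powr (b - 2) = inverse (x powr (2 - b))"
    using x by (simp add: powr_minus[symmetric])
  then show ?thesis using C by (simp add: field_simps)
qed
lemma powr_lim0: "b < 0 \<Longrightarrow> (\<lambda>n. K * real n powr b) \<longlonglongrightarrow> 0"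
  using tendsto_mult_right_zero[OF tendsto_neg_powr[OF _ filterlim_real_sequentially], of b K]
  by simp

lemma N_upper: "real (n choose 2) \<le> real n ^ 2"
proof -
  have "n choose 2 \<le> n ^ 2" by (cases "2 \<le> n") (auto intro: binomial_le_pow simp: binomial_eq_0)
  then show ?thesis by (metis of_nat_le_iff of_nat_power)
qed

lemma N_lower: "n \<ge> 2 \<Longrightarrow> real n ^ 2 / 4 \<le> real (n choose 2)"
proof -
  assume n: "n \<ge> 2"
  have ev: "even (n * (n - 1))" using n by (cases "even n") auto
  have "2 * (n choose 2) = n * (n - 1)" unfolding choose_two using ev by simp
  hence "real (2 * (n choose 2)) = real (n * (n - 1))" by (rule arg_cong)
  hence "2 * real (n choose 2) = real n * (real n - 1)" using n
    by (simp add: of_nat_diff)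
  moreover have "real n * 2 \<le> real n * real n" using n by (intro mult_left_mono) auto
  ultimately show ?thesis by (simp add: power2_eq_square algebra_simps)
qed

lemma asym_one:
  fixes q P :: "nat \<Rightarrow> real"
  assumes PE: "\<And>n. n \<ge> 3 \<Longrightarrow> P n = (1 - q n) ^ (n choose 2)"
    and q01: "\<And>n. n \<ge> 3 \<Longrightarrow> 0 \<le> q n \<and> q n \<le> 1"
    and qb: "\<And>n. n \<ge> 3 \<Longrightarrow> q n \<le> K * real n powr (-b)"
    and b: "b > 2"
  shows "P \<longlonglongrightarrow> 1"
proof -
  have ev: "eventually (\<lambda>n. 1 - K * real n powr (2 - b) \<le> P n \<and> P n \<le> 1) sequentially"
    using eventually_ge_at_top[of 3]
  proof eventually_elim
    case (elim n)
    have q: "0 \<le> q n" "q n \<le> 1" using q01[OF elim] by auto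
    have "P n \<le> 1" unfolding PE[OF elim] using q by (intro power_le_one) auto
    have "1 + real (n choose 2) * (- q n) \<le> (1 + (- q n)) ^ (n choose 2)"
      by (rule Bernoulli_inequality) (use q in auto)
    hence "1 - real (n choose 2) * q n \<le> P n" unfolding PE[OF elim] by simp
    moreover have "real (n choose 2) * q n \<le> real n ^ 2 * (K * real n powr (-b))"
      using N_upper q qb[OF elim] by (intro mult_mono) auto
    moreover have "real n ^ 2 * (K * real n powr (-b)) = K * real n powr (2 - b)"
      using pw[of "real n" b] elim by (simp add: mult.left_commute)
    ultimately show ?case using \<open>P n \<le> 1\<close> by linarith
  qed
  have "(\<lambda>n. 1 - K * real n powr (2 - b)) \<longlonglongrightarrow> 1 - 0"
    by (intro tendsto_diff tendsto_const powr_lim0) (use b in auto)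
  hence L: "(\<lambda>n. 1 - K * real n powr (2 - b)) \<longlonglongrightarrow> 1" by simp
  have e1: "eventually (\<lambda>n. 1 - K * real n powr (2 - b) \<le> P n) sequentially"
    using ev by (rule eventually_mono) (rule conjunct1)
  have e2: "eventually (\<lambda>n. P n \<le> 1) sequentially"
    using ev by (rule eventually_mono) (rule conjunct2)
  show ?thesis by (rule tendsto_sandwich[OF e1 e2 L tendsto_const])
qed

lemma asym_zero:
  fixes q P :: "nat \<Rightarrow> real"
  assumes PE: "\<And>n. n \<ge> 3 \<Longrightarrow> P n = (1 - q n) ^ (n choose 2)"
    and q01: "\<And>n. n \<ge> 3 \<Longrightarrow> 0 \<le> q n \<and> q n \<le> 1"
    and qb: "\<And>n. n \<ge> 3 \<Longrightarrow> C * real n powr (-b) \<le> q n"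
    and b: "b < 2" and C: "C > 0"
  shows "P \<longlonglongrightarrow> 0"
proof -
  have ev: "eventually (\<lambda>n. 0 \<le> P n \<and> P n \<le> (4 / C) * real n powr (b - 2)) sequentially"
    using eventually_ge_at_top[of 3]
  proof eventually_elim
    case (elim n)
    have q: "0 \<le> q n" "q n \<le> 1" using q01[OF elim] by auto
    have "0 \<le> P n" unfolding PE[OF elim] using q by simp
    define Y where "Y = q n * real (n choose 2)"
    have "(1 - q n) ^ (n choose 2) \<le> exp (- q n) ^ (n choose 2)"
      using q by (intro power_mono) (auto simp: exp_ge_add_one_self[of "- q n", simplified] 
        intro: order_trans[OF _ exp_ge_add_one_self])
    also have "\<dots> = exp (- Y)" unfolding Y_def by (simp add: exp_of_nat_mult[symmetric])
    finally have P1: "P n \<le> exp (- Y)" unfolding PE[OF elim] .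
    have "C * real n powr (-b) * (real n ^ 2 / 4) \<le> Y"
      unfolding Y_def using qb[OF elim] N_lower[of n] elim C q
      by (intro mult_mono) auto
    moreover have "C * real n powr (-b) * (real n ^ 2 / 4) = C / 4 * real n powr (2 - b)"
      using pw[of "real n" b] elim by (simp add: mult_ac)
    ultimately have Yl: "C / 4 * real n powr (2 - b) \<le> Y" by linarith
    have Yp: "0 < C / 4 * real n powr (2 - b)" using C elim by simp
    have Ypos: "Y > 0" using Yl Yp by linarith
    have "exp (- Y) \<le> 1 / Y"
    proof -
      have "Y > 0" using Yl Yp by linarith
      have "1 + Y \<le> exp Y" by (rule exp_ge_add_one_self)
      hence "Y \<le> exp Y" by linarith
      thus ?thesis using \<open>Y > 0\<close> by (simp add: exp_minus field_simps)
    qed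
    also have "\<dots> \<le> 1 / (C / 4 * real n powr (2 - b))"
      using Yl Yp C elim Ypos by (intro divide_left_mono mult_pos_pos) auto
    also have "\<dots> = (4 / C) * real n powr (b - 2)"
      using elim C by (intro pw2) auto
    finally show ?case using P1 \<open>0 \<le> P n\<close> by simp
  qed
  have e1: "eventually (\<lambda>n. 0 \<le> P n) sequentially"
    using ev by (rule eventually_mono) (rule conjunct1)
  have e2: "eventually (\<lambda>n. P n \<le> (4 / C) * real n powr (b - 2)) sequentially"
    using ev by (rule eventually_mono) (rule conjunct2)
  have L: "(\<lambda>n. (4 / C) * real n powr (b - 2)) \<longlonglongrightarrow> 0"
    by (rule powr_lim0) (use b in simp)
  show ?thesis by (rule tendsto_sandwich[OF e1 e2 tendsto_const L])
qed



lemma card_upairs: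
  assumes "finite X"
  shows "card (upairs X) = card X choose 2"
proof -
  have "upairs X = {B. B \<subseteq> X \<and> card B = 2}"
    unfolding upairs_def by (auto simp: card_2_iff)
  then show ?thesis using n_subsets[OF assms, of 2] by simp
qed

lemma finite_upairs: "finite X \<Longrightarrow> finite (upairs X)"
proof -
  assume "finite X"
  moreover have "upairs X \<subseteq> Pow X" unfolding upairs_def by auto
  ultimately show ?thesis using finite_subset by blast
qed

lemma set_eq:
  fixes d :: "'a \<Rightarrow> 'a \<Rightarrow> real" and e :: "'a set \<Rightarrow> 'b \<Rightarrow> real"
  shows
  "{\<omega> \<in> S. \<forall>x\<in>X. \<forall>y\<in>X. x \<noteq> y \<longrightarrow> \<bar>(d x y + e {x, y} \<omega>) - d x y\<bar> < t}
   = {\<omega> \<in> S. \<forall>p\<in>upairs X. \<bar>e p \<omega>\<bar> < t}"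
  unfolding upairs_def by auto

theorem proposition1:
  fixes w c :: real
    and X :: "nat \<Rightarrow> 'l set"
    and V :: "nat \<Rightarrow> 'v set" and E :: "nat \<Rightarrow> 'v set set"
    and phi :: "nat \<Rightarrow> 'l \<Rightarrow> 'v" and len :: "nat \<Rightarrow> 'v set \<Rightarrow> real"
    and M :: "nat \<Rightarrow> 'w measure"
    and eps :: "nat \<Rightarrow> 'l set \<Rightarrow> 'w \<Rightarrow> real"
    and P :: "nat \<Rightarrow> real"
  assumes w_pos: "w > 0" and c_pos: "c > 0"
    and card_X: "\<And>n. n \<ge> 3 \<Longrightarrow> finite (X n) \<and> card (X n) = n"
    and tree: "\<And>n. n \<ge> 3 \<Longrightarrow> binary_phylo_tree (X n) (V n) (E n) (phi n)"
    and len_pos: "\<And>n e. n \<ge> 3 \<Longrightarrow> e \<in> E n \<Longrightarrow> len n e > 0"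
    and min_int: "\<And>n. n \<ge> 3 \<Longrightarrow> interior_edges (V n) (E n) \<noteq> {} \<Longrightarrow>
                    Min (len n ` interior_edges (V n) (E n)) = w"
    and prob: "\<And>n. n \<ge> 3 \<Longrightarrow> prob_space (M n)"
    and indep: "\<And>n. n \<ge> 3 \<Longrightarrow>
                  prob_space.indep_vars (M n) (\<lambda>_. borel) (eps n) (upairs (X n))"
    and normal: "\<And>n p. n \<ge> 3 \<Longrightarrow> p \<in> upairs (X n) \<Longrightarrow>
                  distributed (M n) lborel (eps n p) (normal_density 0 (sqrt (c\<^sup>2 / ln (real n))))"
    and P_def: "\<And>n. P n = measure (M n)
                  {\<omega> \<in> space (M n). \<forall>x\<in>X n. \<forall>y\<in>X n. x \<noteq> y \<longrightarrow>
                     \<bar>(tree_metric (V n) (E n) (len n) (phi n) x y + eps n {x, y} \<omega>)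
                       - tree_metric (V n) (E n) (len n) (phi n) x y\<bar> < w / 2}"
  shows "(c > w / 4 \<longrightarrow> P \<longlonglongrightarrow> 0) \<and> (c < w / 4 \<longrightarrow> P \<longlonglongrightarrow> 1)"
proof -
  define a where "a = w^2 / (8 * c^2)"
  have a_pos: "a > 0" unfolding a_def using w_pos c_pos by simp
  define sg where "sg n = sqrt (c^2 / ln (real n))" for n :: nat
  define q where "q n = measure (density lborel (\<lambda>x. ennreal (normal_density 0 (sg n) x))) {x. w/2 \<le> \<bar>x\<bar>}" for n :: nat
  have ln_pos: "ln (real n) > 0" if "n \<ge> 3" for n :: nat using that by simp
  have sg_pos: "sg n > 0" if "n \<ge> 3" for n using ln_pos[OF that] c_pos unfolding sg_def by simp
  have sg_sq: "(sg n)^2 = c^2 / ln (real n)" if "n \<ge> 3" for n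
    using ln_pos[OF that] unfolding sg_def by simp
  have key: "(w/2)^2 / (2 * (sg n)^2) = a * ln (real n)" if "n \<ge> 3" for n
    unfolding sg_sq[OF that] a_def using ln_pos[OF that] c_pos by (simp add: field_simps power2_eq_square)
  have PE: "P n = (1 - q n) ^ (n choose 2)" if n: "n \<ge> 3" for n
  proof -
    have fin: "finite (X n)" and cd: "card (X n) = n" using card_X[OF n] by auto
    have ne: "upairs (X n) \<noteq> {}"
    proof -
      have "card (upairs (X n)) \<noteq> 0" using card_upairs[OF fin] cd n by (simp add: binomial_eq_0_iff)
      thus ?thesis by auto
    qed
    have "P n = measure (M n) {\<omega> \<in> space (M n). \<forall>p\<in>upairs (X n). \<bar>eps n p \<omega>\<bar> < w / 2}"
      unfolding P_def set_eq ..
    also have "\<dots> = (1 - q n) ^ card (upairs (X n))"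
      unfolding q_def
      by (rule prob_part[OF prob[OF n] finite_upairs[OF fin] ne indep[OF n]])
         (use normal[OF n] sg_def prob_space_normal_density[OF sg_pos[OF n]] in auto)
    finally show ?thesis using card_upairs[OF fin] cd by simp
  qed
  have q01: "0 \<le> q n \<and> q n \<le> 1" if "n \<ge> 3" for n
  proof -
    interpret d: prob_space "density lborel (\<lambda>x. ennreal (normal_density 0 (sg n) x))"
      by (rule prob_space_normal_density[OF sg_pos[OF that]])
    show ?thesis unfolding q_def by simp
  qed
  have part1: "P \<longlonglongrightarrow> 0" if cw: "c > w / 4"
  proof -
    have a2: "a < 2"
    proof -
      have "w < 4 * c" using cw by simp
      hence "w^2 < (4*c)^2" using w_pos by (intro power_strict_mono) auto
      thus ?thesis unfolding a_def using c_pos by (simp add: field_simps)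
    qed
    define b where "b = (a + 2) / 2"
    have ab: "a < b" "b < 2" using a2 unfolding b_def by auto
    define r where "r = (w/2) * sqrt (b / a)"
    have r_gt: "w/2 < r"
    proof -
      have "1 < sqrt (b / a)" using ab a_pos by simp
      thus ?thesis unfolding r_def using w_pos by simp
    qed
    define C where "C = (r - w/2) * (sqrt (ln 3) / (c * sqrt (2 * pi)))"
    have C_pos: "C > 0" unfolding C_def using r_gt c_pos by simp
    have qb: "C * real n powr (-b) \<le> q n" if n: "n \<ge> 3" for n
    proof -
      have r2: "r^2 / (2 * (sg n)^2) = b * ln (real n)"
      proof -
        have s2: "(sqrt (b/a))^2 = b/a" using ab a_pos by simp
        have "r^2 = (w/2)^2 * (b / a)" unfolding r_def power_mult_distrib s2 ..
        hence "r^2 / (2 * (sg n)^2) = ((w/2)^2 / (2 * (sg n)^2)) * (b / a)" by simp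
        also have "\<dots> = b * ln (real n)" unfolding key[OF n] using a_pos by simp
        finally show ?thesis .
      qed
      have e: "exp (-(r^2) / (2 * (sg n)^2)) = real n powr (-b)"
        using n r2 by (simp add: powr_def)
      have sq: "sqrt (2 * pi * (sg n)^2) = c * sqrt (2 * pi) / sqrt (ln (real n))"
        unfolding sg_sq[OF n] using c_pos ln_pos[OF n] by (simp add: real_sqrt_mult real_sqrt_divide)
      have l3: "sqrt (ln 3) \<le> sqrt (ln (real n))" using n by simp
      have "C * real n powr (-b) \<le> (r - w/2) * normal_density 0 (sg n) r"
      proof -
        have nd: "normal_density 0 (sg n) r = sqrt (ln (real n)) / (c * sqrt (2 * pi)) * real n powr (-b)"
          unfolding normal_density_def sq using e c_pos by (simp add: field_simps)
        have "sqrt (ln 3) / (c * sqrt (2 * pi)) \<le> sqrt (ln (real n)) / (c * sqrt (2 * pi))"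
          using l3 c_pos by (intro divide_right_mono) auto
        hence "sqrt (ln 3) / (c * sqrt (2 * pi)) * real n powr (-b) \<le> sqrt (ln (real n)) / (c * sqrt (2 * pi)) * real n powr (-b)"
          by (rule mult_right_mono) simp
        hence "(r - w/2) * (sqrt (ln 3) / (c * sqrt (2 * pi)) * real n powr (-b)) \<le> (r - w/2) * (sqrt (ln (real n)) / (c * sqrt (2 * pi)) * real n powr (-b))"
          by (rule mult_left_mono) (use r_gt in simp)
        thus ?thesis unfolding C_def nd by (simp only: mult.assoc)
      qed
      also have "\<dots> \<le> q n" unfolding q_def
        by (rule tail_lower[OF sg_pos[OF n]]) (use w_pos r_gt in auto)
      finally show ?thesis .
    qed
    show ?thesis by (rule asym_zero[OF PE q01 qb ab(2) C_pos])
  qed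
  have part2: "P \<longlonglongrightarrow> 1" if cw: "c < w / 4"
  proof -
    have a2: "a > 2"
    proof -
      have "4 * c < w" using cw by simp
      hence "(4*c)^2 < w^2" using c_pos by (intro power_strict_mono) auto
      thus ?thesis unfolding a_def using c_pos by (simp add: field_simps)
    qed
    define u where "u = (a - 2) / (2 * a)"
    have u: "0 < u" "u < 1" unfolding u_def using a2 by (auto simp: field_simps)
    define b where "b = (1 - u) * a"
    have b2: "b > 2" unfolding b_def u_def using a2 by (simp add: field_simps)
    have qb: "q n \<le> (1 / sqrt u) * real n powr (-b)" if n: "n \<ge> 3" for n
    proof -
      have "q n \<le> exp (-(1-u)*(w/2)^2/(2 * (sg n)^2)) / sqrt u"
        unfolding q_def by (rule tail_upper[OF sg_pos[OF n] u]) (use w_pos in auto)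
      also have "-(1-u)*(w/2)^2/(2 * (sg n)^2) = -(1-u) * ((w/2)^2/(2 * (sg n)^2))" by simp
      also have "\<dots> = -b * ln (real n)" unfolding key[OF n] b_def by (simp add: algebra_simps)
      also have "exp (-b * ln (real n)) = real n powr (-b)" using n by (simp add: powr_def)
      finally show ?thesis by simp
    qed
    show ?thesis by (rule asym_one[OF PE q01 qb b2])
  qed
  show ?thesis using part1 part2 by blast
qed

end
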